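(* Let $d\ge 2$ and let $P_n\subset\mathbb{R}^d$ be a $d$-dimensional simplicial polytope whose vertices $x_1,\dots,x_n$ all lie on $\partial B_2^d$. Let $F_j$, $j=1,\dots,m$, be the $(d-1)$-dimensional faces of $P_n$, $H_j$ the hyperplane containing $F_j$, $H_j^-$ the closed halfspace bounded by $H_j$ not containing $P_n$ (i.e. opposite to the halfspace $H_j^+$ containing $P_n$), and $h_j$ the height of the cap $B_2^d\cap H_j^-$. Let $\mathcal N$ be the set of indices $j$ with $$h_j\le \frac18\Big(\frac{\mathrm{vol}_{d-1}(\partial P_n)}{\mathrm{vol}_{d-1}(\partial B_2^d)}\cdot\frac1{4n}\Big)^{\frac2{d-1}}.$$ Then $$\mathrm{vol}_{d-1}\Big(\bigcup_{j\in\mathcal N}F_j\Big)\le\frac14\,\mathrm{vol}_{d-1}(\partial P_n).$$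
   Context: $B_2^d$ is the closed Euclidean unit ball, $\partial B_2^d$ the unit sphere, $\mathrm{vol}_{d-1}$ the $(d-1)$-dimensional surface measure. The height of the cap $B_2^d\cap H_j^-$ is its width in the direction normal to $H_j$, i.e. the maximal distance from a point of $B_2^d\cap H_j^-$ to $H_j$. *)

theory Defs
  imports "HOL-Analysis.Analysis"
begin

text \<open>(d-1)-dimensional volume of a set F lying in an affine hyperplane:
  the d-dimensional Lebesgue measure of the right prism of height 1 over F
  in the direction of a unit normal u of the hyperplane.\<close>
definition flat_area :: "'a::euclidean_space set \<Rightarrow> real" where
  "flat_area F =
     (let u = (SOME u. norm u = 1 \<and> (\<forall>x\<in>F. \<forall>y\<in>F. u \<bullet> (x - y) = 0))
      in measure lebesgue {x + t *\<^sub>R u | x t. x \<in> F \<and> t \<in> {0..1}})"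

definition polytope_surface_area :: "'a::euclidean_space set \<Rightarrow> real" where
  "polytope_surface_area P = (\<Sum>F\<in>{F. F facet_of P}. flat_area F)"

text \<open>Surface area of the unit sphere, defined as the Minkowski content of the unit ball.\<close>
definition sphere_area :: "'a::euclidean_space itself \<Rightarrow> real" where
  "sphere_area TYPE('a) =
     Lim (at_right 0) (\<lambda>e. (measure lebesgue (cball (0::'a) (1 + e)) - measure lebesgue (cball (0::'a) 1)) / e)"

definition outer_halfspace :: "'a::euclidean_space set \<Rightarrow> 'a set \<Rightarrow> 'a set" where
  "outer_halfspace P F = {x. \<exists>u b. u \<noteq> 0 \<and> affine hull F = {y. u \<bullet> y = b}
        \<and> P \<subseteq> {y. u \<bullet> y \<le> b} \<and> u \<bullet> x \<ge> b}"

definition cap_height :: "'a::euclidean_space set \<Rightarrow> 'a set \<Rightarrow> real" where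
  "cap_height P F = Sup {infdist x (affine hull F) | x. x \<in> cball 0 1 \<inter> outer_halfspace P F}"

end

theory Submission
  imports Defs "HOL-Analysis.Analysis"
begin

typedef (overloaded) ('a::euclidean_space) bidx = "Basis :: 'a set"
  using nonempty_Basis by blast

instance bidx :: (euclidean_space) finite
proof
  have "(UNIV :: 'a bidx set) = Abs_bidx ` Basis"
    using type_definition.Abs_image[OF type_definition_bidx] by (simp add: eq_commute)
  then show "finite (UNIV :: 'a bidx set)" by (metis finite_Basis finite_imageI)
qed

definition bidx_ix :: "'a::euclidean_space bidx \<Rightarrow> nat" where
  "bidx_ix = (SOME f. inj f)"

lemma inj_bidx_ix: "inj bidx_ix"
proof -
  obtain f :: "'a bidx \<Rightarrow> nat" and n where "inj_on f UNIV"
    using finite_imp_inj_to_nat_seg[of "UNIV :: 'a bidx set"] by auto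
  then show ?thesis unfolding bidx_ix_def by (metis someI_ex)
qed

instantiation bidx :: (euclidean_space) linorder
begin
definition "less_eq_bidx (x::'a bidx) y \<longleftrightarrow> bidx_ix x \<le> bidx_ix (y::'a bidx)"
definition "less_bidx (x::'a bidx) y \<longleftrightarrow> bidx_ix x < bidx_ix (y::'a bidx)"
instance
proof
  fix x y z :: "'a::euclidean_space bidx"
  show "(x < y) = (x \<le> y \<and> \<not> y \<le> x)" by (auto simp: less_eq_bidx_def less_bidx_def)
  show "x \<le> x" by (simp add: less_eq_bidx_def)
  show "x \<le> y \<Longrightarrow> y \<le> z \<Longrightarrow> x \<le> z" by (simp add: less_eq_bidx_def)
  show "x \<le> y \<Longrightarrow> y \<le> x \<Longrightarrow> x = y"
    using inj_bidx_ix by (metis less_eq_bidx_def le_antisym injD)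
  show "x \<le> y \<or> y \<le> x" by (auto simp: less_eq_bidx_def)
qed
end

instance bidx :: (euclidean_space) wellorder
proof
  fix P :: "'a::euclidean_space bidx \<Rightarrow> bool" and a :: "'a bidx"
  assume h: "\<And>x. (\<And>y. y < x \<Longrightarrow> P y) \<Longrightarrow> P x"
  show "P a"
    by (induct a rule: measure_induct_rule[of bidx_ix]) (rule h, auto simp: less_bidx_def)
qed

definition phiB :: "real^('a::euclidean_space bidx) \<Rightarrow> 'a" where
  "phiB v = (\<Sum>i\<in>UNIV. (v$i) *\<^sub>R Rep_bidx i)"

definition psiB :: "'a::euclidean_space \<Rightarrow> real^('a bidx)" where
  "psiB z = (\<chi> i. z \<bullet> Rep_bidx i)"

lemma Rep_bidx_Basis: "Rep_bidx i \<in> Basis"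
  using Rep_bidx by blast

lemma bij_Rep_bidx: "bij_betw Rep_bidx UNIV (Basis::'a::euclidean_space set)"
  by (metis Rep_bidx_inject bij_betw_def inj_onI type_definition.Rep_range type_definition_bidx)

lemma phiB_inner_Rep: "phiB v \<bullet> Rep_bidx j = v $ j"
proof -
  have "phiB v \<bullet> Rep_bidx j = (\<Sum>i\<in>UNIV. (v$i) * (Rep_bidx i \<bullet> Rep_bidx j))"
    by (simp add: phiB_def inner_sum_left)
  also have "\<dots> = (\<Sum>i\<in>UNIV. if i = j then v$i else 0)"
    by (rule sum.cong) (auto simp: inner_Basis Rep_bidx_Basis Rep_bidx_inject)
  finally show ?thesis by simp
qed

lemma psiB_phiB[simp]: "psiB (phiB v) = v"
  by (simp add: psiB_def phiB_inner_Rep vec_eq_iff)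

lemma phiB_psiB[simp]: "phiB (psiB z) = z"
proof -
  have "phiB (psiB z) = (\<Sum>b\<in>Basis. (z \<bullet> b) *\<^sub>R b)"
    unfolding phiB_def psiB_def
    using sum.reindex_bij_betw[OF bij_Rep_bidx, of "\<lambda>b. (z \<bullet> b) *\<^sub>R b"] by simp
  then show ?thesis by (simp add: euclidean_representation)
qed

lemma linear_phiB: "linear phiB"
  unfolding phiB_def by (auto intro!: linearI simp: scaleR_add_left sum.distrib scaleR_sum_right)

lemma linear_psiB: "linear psiB"
  unfolding psiB_def by (auto intro!: linearI simp: vec_eq_iff inner_add_left)

lemma inner_psiB: "psiB z \<bullet> psiB w = z \<bullet> w"
proof -
  have "psiB z \<bullet> psiB w = (\<Sum>i\<in>UNIV. (z \<bullet> Rep_bidx i) * (w \<bullet> Rep_bidx i))"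
    by (simp add: psiB_def inner_vec_def)
  also have "\<dots> = (\<Sum>b\<in>Basis. (z \<bullet> b) * (w \<bullet> b))"
    using sum.reindex_bij_betw[OF bij_Rep_bidx, of "\<lambda>b. (z \<bullet> b) * (w \<bullet> b)"] by simp
  also have "\<dots> = z \<bullet> w" by (rule euclidean_inner[symmetric])
  finally show ?thesis .
qed

lemma inner_phiB: "phiB v \<bullet> phiB w = v \<bullet> w"
  by (metis inner_psiB psiB_phiB)


lemma Basis_cart_real: "(Basis :: (real^'n) set) = range (\<lambda>i. axis i 1)"
  by (auto simp: Basis_vec_def)

lemma prod_Basis_cart: "(\<Prod>b\<in>(Basis :: (real^'n) set). f b) = (\<Prod>i\<in>UNIV. f (axis i 1))"
proof -
  have "inj (\<lambda>i::'n. axis i (1::real))"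
    by (auto intro!: injI simp: axis_eq_axis)
  then show ?thesis unfolding Basis_cart_real by (simp add: prod.reindex)
qed

lemma lborel_phiB: "(lborel :: 'a::euclidean_space measure) = distr lborel borel phiB"
proof (rule lborel_eqI)
  fix l u :: 'a
  assume le: "\<And>b. b \<in> Basis \<Longrightarrow> l \<bullet> b \<le> u \<bullet> b"
  have meas: "phiB \<in> borel_measurable borel"
    by (intro borel_measurable_continuous_onI linear_continuous_on) (simp add: linear_conv_bounded_linear[symmetric] linear_phiB)
  have pre: "phiB -` box l u = box (psiB l) (psiB u)"
  proof -
    have "x \<in> phiB -` box l u \<longleftrightarrow> x \<in> box (psiB l) (psiB u)" for x
    proof -
      have "x \<in> phiB -` box l u \<longleftrightarrow> (\<forall>b\<in>Basis. l \<bullet> b < phiB x \<bullet> b \<and> phiB x \<bullet> b < u \<bullet> b)"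
        by (simp add: mem_box)
      also have "\<dots> \<longleftrightarrow> (\<forall>i. l \<bullet> Rep_bidx i < phiB x \<bullet> Rep_bidx i \<and> phiB x \<bullet> Rep_bidx i < u \<bullet> Rep_bidx i)"
        using bij_Rep_bidx unfolding bij_betw_def by (metis (no_types, lifting) rangeE rangeI)
      also have "\<dots> \<longleftrightarrow> x \<in> box (psiB l) (psiB u)"
        by (simp add: mem_box_cart psiB_def phiB_inner_Rep)
      finally show ?thesis .
    qed
    then show ?thesis by blast
  qed
  have "emeasure (distr lborel borel phiB) (box l u) = emeasure lborel (box (psiB l) (psiB u))"
    using meas by (subst emeasure_distr) (auto simp: pre)
  also have "\<dots> = (\<Prod>i\<in>UNIV. (psiB u - psiB l) \<bullet> axis i 1)"
  proof -
    have "\<forall>b\<in>Basis. psiB l \<bullet> b \<le> psiB u \<bullet> b"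
      using le by (auto simp: Basis_cart_real psiB_def inner_axis Rep_bidx_Basis)
    then show ?thesis
      by (simp only: emeasure_lborel_box_eq prod_Basis_cart) (simp only: if_P)
  qed
  also have "\<dots> = (\<Prod>i\<in>UNIV. (u - l) \<bullet> Rep_bidx i)"
    by (simp add: psiB_def inner_axis inner_diff_left)
  also have "\<dots> = (\<Prod>b\<in>Basis. (u - l) \<bullet> b)"
    using prod.reindex_bij_betw[OF bij_Rep_bidx, of "\<lambda>b. (u - l) \<bullet> b"] by simp
  finally show "emeasure (distr lborel borel phiB) (box l u) = (\<Prod>b\<in>Basis. (u - l) \<bullet> b)" .
qed simp


lemma det_rank_one:
  fixes p q :: "real^'n::{finite,wellorder}"
  shows "det (matrix (\<lambda>v. v + (v \<bullet> p) *\<^sub>R q)) = 1 + q \<bullet> p"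
proof (cases "p = 0")
  case True
  then show ?thesis
  proof -
    have "(\<lambda>v::real^'n::{finite,wellorder}. v + (v \<bullet> p) *\<^sub>R q) = id" using True by auto
    then show ?thesis using True by (simp add: matrix_id_mat_1 det_I)
  qed
next
  case False
  define k :: 'n where "k = (LEAST i. True)"
  have kle: "k \<le> i" for i unfolding k_def by (rule Least_le) simp
  have n1: "norm (axis k (1::real)) = norm (p /\<^sub>R norm p)"
    using False by simp
  obtain Q where Q: "orthogonal_transformation Q" "Q (axis k (1::real)) = p /\<^sub>R norm p"
    by (rule orthogonal_transformation_exists[OF n1])
  obtain w where w: "Q w = q"
    using orthogonal_transformation_surj[OF Q(1)] by (metis surjD)
  have linQ: "linear Q" using Q(1) orthogonal_transformation_linear by blast
  have pQ: "p = norm p *\<^sub>R Q (axis k 1)" using Q(2) False by simp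
  have innQ: "Q v \<bullet> Q v' = v \<bullet> v'" for v v'
    using Q(1) by (simp add: orthogonal_transformation_def)
  define N where "N = (\<lambda>v::real^'n::{finite,wellorder}. v + (v \<bullet> p) *\<^sub>R q)"
  define A where "A = (\<lambda>v::real^'n::{finite,wellorder}. v + (norm p * v $ k) *\<^sub>R w)"
  have linN: "linear N" unfolding N_def
    by (auto intro!: linearI simp: inner_add_left scaleR_add_left algebra_simps)
  have linA: "linear A" unfolding A_def
    by (auto intro!: linearI simp: scaleR_add_left algebra_simps)
  have comp: "Q \<circ> A = N \<circ> Q"
  proof
    fix v
    have "Q v \<bullet> p = norm p * v $ k"
      by (subst pQ) (simp add: innQ inner_axis)
    then show "(Q \<circ> A) v = (N \<circ> Q) v"
      by (simp add: A_def N_def linear_add[OF linQ] linear_scale[OF linQ] w)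
  qed
  have "det (matrix Q) * det (matrix A) = det (matrix N) * det (matrix Q)"
    using comp by (metis det_mul matrix_compose linA linN linQ)
  moreover have "det (matrix Q) \<noteq> 0"
    using orthogonal_transformation_det[OF Q(1)] by auto
  ultimately have eq: "det (matrix N) = det (matrix A)" by simp
  have mA: "matrix A $ i $ j = (if i = j then 1 else 0) + (if j = k then norm p * w $ i else 0)" for i j
    by (simp add: matrix_def A_def axis_def)
  have "det (matrix A) = (\<Prod>i\<in>UNIV. matrix A $ i $ i)"
  proof (rule det_lowerdiagonal)
    fix i j :: 'n assume "i < j"
    then have "j \<noteq> k" "i \<noteq> j" using kle[of i] by auto
    then show "matrix A $ i $ j = 0" by (simp add: mA)
  qed
  also have "\<dots> = (\<Prod>i\<in>UNIV. if i = k then 1 + norm p * w $ k else 1)"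
    by (rule prod.cong) (auto simp: mA)
  also have "\<dots> = 1 + norm p * w $ k"
    by (simp add: prod.delta)
  also have "\<dots> = 1 + q \<bullet> p"
    by (subst pQ, subst w[symmetric]) (simp add: innQ inner_axis)
  finally show ?thesis using eq N_def by simp
qed

lemma compact_psiB: "compact S \<Longrightarrow> compact (psiB ` S)"
  by (intro compact_continuous_image linear_continuous_on)
     (simp add: linear_conv_bounded_linear[symmetric] linear_psiB)

lemma measure_psiB:
  fixes S :: "'a::euclidean_space set"
  assumes "compact S"
  shows "measure lebesgue (psiB ` S) = measure lebesgue S"
proof -
  have SB: "S \<in> sets borel" using assms by (simp add: compact_imp_closed borel_closed)
  have TB: "psiB ` S \<in> sets borel" using compact_psiB[OF assms] by (simp add: compact_imp_closed borel_closed)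
  have meas: "phiB \<in> borel_measurable borel"
    by (intro borel_measurable_continuous_onI linear_continuous_on) (simp add: linear_conv_bounded_linear[symmetric] linear_phiB)
  have pre: "phiB -` S = psiB ` S"
    by (auto simp: image_iff) (metis psiB_phiB)
  have "measure lebesgue S = measure lborel S"
    using SB by simp
  also have "\<dots> = measure (distr lborel borel phiB) S"
    by (subst lborel_phiB) simp
  also have "\<dots> = measure lborel (phiB -` S)"
    using meas SB by (subst measure_distr) auto
  also have "\<dots> = measure lebesgue (psiB ` S)"
    using TB by (simp add: pre)
  finally show ?thesis by simp
qed

lemma measure_linear_image_B:
  fixes M :: "'a::euclidean_space \<Rightarrow> 'a"
  assumes "linear M" "compact S"
  shows "measure lebesgue (M ` S) = \<bar>det (matrix (psiB \<circ> M \<circ> phiB))\<bar> * measure lebesgue S"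
proof -
  have cMS: "compact (M ` S)"
    by (intro compact_continuous_image linear_continuous_on assms)
       (simp add: linear_conv_bounded_linear[symmetric] assms)
  have lin: "linear (psiB \<circ> M \<circ> phiB)"
    by (intro linear_compose linear_phiB linear_psiB assms)
  have img: "psiB ` (M ` S) = (psiB \<circ> M \<circ> phiB) ` (psiB ` S)"
    by (auto simp: image_iff)
  have "measure lebesgue (M ` S) = measure lebesgue (psiB ` (M ` S))"
    using measure_psiB[OF cMS] by simp
  also have "\<dots> = \<bar>det (matrix (psiB \<circ> M \<circ> phiB))\<bar> * measure lebesgue (psiB ` S)"
    unfolding img by (rule measure_linear_image[OF lin lmeasurable_compact[OF compact_psiB[OF assms(2)]]])
  also have "\<dots> = \<bar>det (matrix (psiB \<circ> M \<circ> phiB))\<bar> * measure lebesgue S"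
    using measure_psiB[OF assms(2)] by simp
  finally show ?thesis .
qed

lemma measure_rank_one_image:
  fixes p q :: "'a::euclidean_space"
  assumes "compact S"
  shows "measure lebesgue ((\<lambda>w. w + (w \<bullet> p) *\<^sub>R q) ` S) = \<bar>1 + q \<bullet> p\<bar> * measure lebesgue S"
proof -
  have lin: "linear (\<lambda>w. w + (w \<bullet> p) *\<^sub>R q)"
    by (auto intro!: linearI simp: inner_add_left scaleR_add_left algebra_simps)
  have "psiB \<circ> (\<lambda>w. w + (w \<bullet> p) *\<^sub>R q) \<circ> phiB = (\<lambda>v. v + (v \<bullet> psiB p) *\<^sub>R psiB q)"
  proof
    fix v
    have "phiB v \<bullet> p = v \<bullet> psiB p" by (metis inner_phiB phiB_psiB)
    then show "(psiB \<circ> (\<lambda>w. w + (w \<bullet> p) *\<^sub>R q) \<circ> phiB) v = v + (v \<bullet> psiB p) *\<^sub>R psiB q"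
      by (simp add: linear_add[OF linear_psiB] linear_scale[OF linear_psiB])
  qed
  then show ?thesis
    using measure_linear_image_B[OF lin assms] det_rank_one[of "psiB p" "psiB q"]
    by (simp add: inner_psiB)
qed

definition prism :: "'a::euclidean_space set \<Rightarrow> 'a \<Rightarrow> real \<Rightarrow> 'a set" where
  "prism F v T = (\<lambda>(y,t). y + t *\<^sub>R v) ` (F \<times> {0..T})"

lemma mem_prism: "z \<in> prism F v T \<longleftrightarrow> (\<exists>y t. y \<in> F \<and> 0 \<le> t \<and> t \<le> T \<and> z = y + t *\<^sub>R v)"
  unfolding prism_def by (auto simp: image_iff) (metis atLeastAtMost_iff)+

lemma compact_prism: "compact F \<Longrightarrow> compact (prism F v T)"
  unfolding prism_def
  by (intro compact_continuous_image compact_Times) (auto intro!: continuous_intros simp: case_prod_unfold)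

lemma affine_hull_hyp:
  fixes F :: "'a::euclidean_space set"
  assumes "F \<noteq> {}" "F \<subseteq> {z. u \<bullet> z = b}" "u \<noteq> 0" "aff_dim F = int DIM('a) - 1"
  shows "affine hull F = {z. u \<bullet> z = b}"
proof (rule affine_dim_equal)
  show "affine hull F \<subseteq> {z. u \<bullet> z = b}"
    using assms(2) by (intro hull_minimal) (auto simp: affine_hyperplane)
qed (use assms affine_hyperplane in auto)

lemma oblique_prism_measure:
  fixes F :: "'a::euclidean_space set"
  assumes "compact F" "F \<subseteq> {z. u \<bullet> z = b}" "norm u = 1" "T > 0"
  shows "measure lebesgue (prism F e T) = \<bar>T * (u \<bullet> e)\<bar> * measure lebesgue (prism F u 1)"
proof -
  define q where "q = T *\<^sub>R e - u"
  define M where "M = (\<lambda>w. w + (w \<bullet> u) *\<^sub>R q)"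
  have uu: "u \<bullet> u = 1" using assms(3) by (simp add: norm_eq_1)
  have img: "M ` prism F u 1 = (+) (b *\<^sub>R q) ` prism F e T"
  proof -
    have "M (y + t *\<^sub>R u) = b *\<^sub>R q + (y + (t * T) *\<^sub>R e)" if "y \<in> F" for y t
    proof -
      have "u \<bullet> y = b" using that assms(2) by auto
      then have "y \<bullet> u = b" by (simp add: inner_commute)
      then show ?thesis
        by (simp add: M_def q_def inner_add_left uu algebra_simps)
    qed
    moreover have "t * T \<in> {0..T} \<longleftrightarrow> t \<in> {0..1}" for t
      using assms(4) by (auto simp: mult_le_cancel_right2 zero_le_mult_iff)
    ultimately show ?thesis
      unfolding prism_def image_image
      apply (auto simp: image_iff)
      subgoal for y t by (rule bexI[of _ "y"], rule bexI[of _ "t * T"]) auto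
      subgoal for y t by (rule bexI[of _ "y"], rule bexI[of _ "t / T"]) (use assms(4) in \<open>auto simp: field_simps\<close>)
      done
  qed
  have "measure lebesgue (prism F e T) = measure lebesgue (M ` prism F u 1)"
    by (simp add: img measure_translation)
  also have "\<dots> = \<bar>1 + q \<bullet> u\<bar> * measure lebesgue (prism F u 1)"
    unfolding M_def by (rule measure_rank_one_image[OF compact_prism[OF assms(1)]])
  also have "1 + q \<bullet> u = T * (u \<bullet> e)"
    by (simp add: q_def inner_diff_right uu inner_commute)
  finally show ?thesis .
qed


lemma prism_neg: "prism F (-u) 1 = (+) (-u) ` prism F u 1"
proof -
  have "y + t *\<^sub>R (-u) = -u + (y + (1 - t) *\<^sub>R u)" for y t
    by (simp add: algebra_simps)
  then show ?thesis
    unfolding prism_def image_image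
    apply (auto simp: image_iff)
    subgoal for y t by (rule bexI[of _ y], rule bexI[of _ "1 - t"]) auto
    subgoal for y t by (rule bexI[of _ y], rule bexI[of _ "1 - t"]) (auto simp: algebra_simps)
    done
qed

lemma flat_area_eq:
  fixes F :: "'a::euclidean_space set"
  assumes "F \<noteq> {}" "F \<subseteq> {z. u \<bullet> z = b}" "norm u = 1" "aff_dim F = int DIM('a) - 1"
  shows "flat_area F = measure lebesgue (prism F u 1)"
proof -
  define u' where "u' = (SOME u. norm u = 1 \<and> (\<forall>x\<in>F. \<forall>y\<in>F. u \<bullet> (x - y) = 0))"
  have "norm u = 1 \<and> (\<forall>x\<in>F. \<forall>y\<in>F. u \<bullet> (x - y) = 0)"
    using assms(2,3) by (auto simp: inner_diff_right)
  then have "norm u' = 1 \<and> (\<forall>x\<in>F. \<forall>y\<in>F. u' \<bullet> (x - y) = 0)"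
    unfolding u'_def by (rule someI)
  then have u': "norm u' = 1" "\<And>x y. x \<in> F \<Longrightarrow> y \<in> F \<Longrightarrow> u' \<bullet> (x - y) = 0"
    by auto
  have AH: "affine hull F = {z. u \<bullet> z = b}"
    by (rule affine_hull_hyp) (use assms in auto)
  obtain y0 where y0: "y0 \<in> F" using assms(1) by blast
  have orth: "u' \<bullet> w = 0" if "u \<bullet> w = 0" for w
  proof -
    have "F \<subseteq> {z. u' \<bullet> z = u' \<bullet> y0}"
      using u'(2)[OF _ y0] by (auto simp: inner_diff_right)
    then have "affine hull F \<subseteq> {z. u' \<bullet> z = u' \<bullet> y0}"
      by (intro hull_minimal) (auto simp: affine_hyperplane)
    moreover have "y0 + w \<in> affine hull F"
      using y0 assms(2) that by (auto simp: AH inner_add_right)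
    ultimately show ?thesis by (auto simp: inner_add_right)
  qed
  define c where "c = u' \<bullet> u"
  have uu: "u \<bullet> u = 1" using assms(3) by (simp add: norm_eq_1)
  define w where "w = u' - c *\<^sub>R u"
  have "u \<bullet> w = 0" by (simp add: w_def c_def inner_diff_right uu inner_commute)
  then have "u' \<bullet> w = 0" by (rule orth)
  then have "w \<bullet> w = 0"
    using \<open>u \<bullet> w = 0\<close> by (simp add: w_def inner_diff_left inner_commute)
  then have "u' = c *\<^sub>R u" by (simp add: w_def)
  then have c: "c = 1 \<or> c = -1"
    using u'(1) assms(3) by (auto simp: abs_if split: if_splits)
  have "flat_area F = measure lebesgue (prism F u' 1)"
    unfolding flat_area_def Let_def u'_def[symmetric] prism_def
    by (rule arg_cong[where f="measure lebesgue"]) (auto simp: image_iff; blast)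
  also have "\<dots> = measure lebesgue (prism F u 1)"
    using c \<open>u' = c *\<^sub>R u\<close> by (metis measure_translation prism_neg scaleR_one scaleR_minus1_left)
  finally show ?thesis .
qed


lemma reflection_exists:
  fixes a e :: "'a::euclidean_space"
  assumes "norm a = 1" "norm e = 1"
  obtains R where "linear R" "\<And>w. R (R w) = w" "\<And>w w'. R w \<bullet> R w' = w \<bullet> w'" "R a = e"
    "\<And>S. compact S \<Longrightarrow> measure lebesgue (R ` S) = measure lebesgue S"
proof (cases "a = e")
  case True
  then show ?thesis using that[of id] by (auto simp: image_id linear_id)
next
  case False
  define v where "v = e - a"
  have aa: "a \<bullet> a = 1" "e \<bullet> e = 1" using assms by (auto simp: norm_eq_1)
  have vv: "v \<bullet> v = 2 - 2 * (a \<bullet> e)"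
    by (simp add: v_def inner_diff_left inner_diff_right aa inner_commute)
  have "v \<noteq> 0" using False by (simp add: v_def)
  then have vpos: "v \<bullet> v > 0" by simp
  define k where "k = 2 / (v \<bullet> v)"
  have kv: "k * (v \<bullet> v) = 2" using vpos by (simp add: k_def)
  define R where "R = (\<lambda>w. w + (w \<bullet> v) *\<^sub>R ((- k) *\<^sub>R v))"
  have lin: "linear R" unfolding R_def
    by (auto intro!: linearI simp: inner_add_left scaleR_add_left algebra_simps)
  have Rv: "R w \<bullet> v = - (w \<bullet> v)" for w
    using kv by (simp add: R_def inner_add_left algebra_simps)
  have inv: "R (R w) = w" for w
  proof -
    have "R (R w) = R w + (R w \<bullet> v) *\<^sub>R ((- k) *\<^sub>R v)" by (simp add: R_def)
    also have "\<dots> = w" by (simp add: Rv) (simp add: R_def)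
    finally show ?thesis .
  qed
  have inn: "R w \<bullet> R w' = w \<bullet> w'" for w w'
  proof -
    have "R w \<bullet> R w' = w \<bullet> w' - 2 * k * (w \<bullet> v) * (w' \<bullet> v) + k * (k * (v \<bullet> v)) * (w \<bullet> v) * (w' \<bullet> v)"
      by (simp add: R_def inner_add_left inner_add_right algebra_simps inner_commute)
    then show ?thesis by (simp add: kv)
  qed
  have Ra: "R a = e"
  proof -
    have "a \<bullet> v = a \<bullet> e - 1" by (simp add: v_def inner_diff_right aa)
    then have "v \<bullet> v = - 2 * (a \<bullet> v)" using vv by simp
    then have "k * (a \<bullet> v) = -1"
      using vpos by (simp add: k_def)
    then have "R a = a + v" by (simp add: R_def algebra_simps)
    then show ?thesis by (simp add: v_def)
  qed
  have meas: "measure lebesgue (R ` S) = measure lebesgue S" if "compact S" for S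
  proof -
    have "measure lebesgue (R ` S) = \<bar>1 + ((- k) *\<^sub>R v) \<bullet> v\<bar> * measure lebesgue S"
      unfolding R_def by (rule measure_rank_one_image[OF that])
    also have "1 + ((- k) *\<^sub>R v) \<bullet> v = -1" using kv by simp
    finally show ?thesis by simp
  qed
  show ?thesis by (rule that[OF lin inv inn Ra meas])
qed


definition cyl :: "'a::euclidean_space \<Rightarrow> 'a \<Rightarrow> real \<Rightarrow> real \<Rightarrow> real \<Rightarrow> 'a set" where
  "cyl e p r a H = {z. norm ((z - p) - ((z - p) \<bullet> e) *\<^sub>R e) \<le> r \<and> a \<le> z \<bullet> e \<and> z \<bullet> e \<le> a + H}"

definition bvec :: "'a::euclidean_space" where "bvec = (SOME b. b \<in> Basis)"

lemma bvec_Basis: "bvec \<in> Basis"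
  unfolding bvec_def by (rule someI_ex) (use nonempty_Basis in blast)

lemma norm_bvec: "norm (bvec::'a::euclidean_space) = 1"
  by (rule norm_Basis[OF bvec_Basis])

lemma inner_bvec: "(bvec::'a::euclidean_space) \<bullet> bvec = 1"
  using inner_Basis[OF bvec_Basis bvec_Basis] by simp

definition ccyl :: "'a::euclidean_space itself \<Rightarrow> real" where
  "ccyl _ = measure lebesgue (cyl (bvec::'a) 0 1 0 1)"

lemma compact_cyl0: "compact (cyl (bvec::'a::euclidean_space) 0 1 0 1)"
proof (rule iffD2[OF compact_eq_bounded_closed], rule conjI)
  have "norm z \<le> 2" if "z \<in> cyl (bvec::'a) 0 1 0 1" for z
  proof -
    have "norm z \<le> norm (z - (z \<bullet> bvec) *\<^sub>R bvec) + norm ((z \<bullet> bvec) *\<^sub>R (bvec::'a))"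
      by (metis diff_add_cancel norm_triangle_ineq)
    also have "\<dots> \<le> 1 + 1"
      using that by (intro add_mono) (auto simp: cyl_def norm_bvec)
    finally show ?thesis by simp
  qed
  then show "bounded (cyl (bvec::'a) 0 1 0 1)"
    by (intro boundedI) auto
  have "closed {z::'a. norm (z - (z \<bullet> bvec) *\<^sub>R bvec) \<le> 1}"
    by (intro closed_Collect_le continuous_intros)
  moreover have "closed {z::'a. 0 \<le> z \<bullet> bvec}" "closed {z::'a. z \<bullet> bvec \<le> 1}"
    by (intro closed_Collect_le continuous_intros)+
  ultimately show "closed (cyl (bvec::'a) 0 1 0 1)"
    unfolding cyl_def by (simp add: Collect_conj_eq closed_Int)
qed

lemma cyl_measure:
  fixes e p :: "'a::euclidean_space"
  assumes "norm e = 1" "r > 0" "H > 0"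
  shows "compact (cyl e p r a H)"
    "measure lebesgue (cyl e p r a H) = ccyl TYPE('a) * r ^ (DIM('a) - 1) * H"
proof -
  obtain R where R: "linear R" "\<And>w. R (R w) = w" "\<And>w w'. R w \<bullet> R w' = w \<bullet> w'" "R bvec = e"
    "\<And>S. compact S \<Longrightarrow> measure lebesgue (R ` S) = measure lebesgue S"
    using reflection_exists[OF norm_bvec assms(1)] by metis
  define C0 where "C0 = cyl (bvec::'a) 0 1 0 1"
  define M where "M = (\<lambda>w. w + (w \<bullet> e) *\<^sub>R ((H / r - 1) *\<^sub>R e))"
  define \<delta> where "\<delta> = p - (p \<bullet> e) *\<^sub>R e + a *\<^sub>R e"
  define G where "G = (\<lambda>x. r *\<^sub>R x + \<delta>)"
  have ee: "e \<bullet> e = 1" using assms(1) by (simp add: norm_eq_1)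
  have bb: "(bvec::'a) \<bullet> bvec = 1" by (rule inner_bvec)
  have Re: "R e = bvec" using R(2)[of bvec] R(4) by simp
  have Rnorm: "norm (R w) = norm w" for w using R(3)[of w w] by (simp add: norm_eq_sqrt_inner)
  have linM: "linear M" unfolding M_def
    by (auto intro!: linearI simp: inner_add_left scaleR_add_left algebra_simps add_divide_distrib)
  have eqimg: "cyl e p r a H = G ` (M ` (R ` C0))"
  proof
    show "cyl e p r a H \<subseteq> G ` (M ` (R ` C0))"
    proof
      fix z assume z: "z \<in> cyl e p r a H"
      define t where "t = (z - p) - ((z - p) \<bullet> e) *\<^sub>R e"
      define \<tau> where "\<tau> = (z \<bullet> e - a) / H"
      define c where "c = R (t /\<^sub>R r) + \<tau> *\<^sub>R bvec"
      have te: "t \<bullet> e = 0" by (simp add: t_def inner_diff_left ee)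
      have tn: "norm t \<le> r" using z by (simp add: cyl_def t_def)
      have \<tau>: "0 \<le> \<tau>" "\<tau> \<le> 1" using z assms(3) by (auto simp: cyl_def \<tau>_def field_simps)
      have Rtb: "R (t /\<^sub>R r) \<bullet> bvec = 0"
        by (metis R(3) Re inner_scaleR_left te mult_zero_right)
      have cb: "c \<bullet> bvec = \<tau>" by (simp add: c_def inner_add_left Rtb bb)
      have c1: "c - (c \<bullet> bvec) *\<^sub>R bvec = R (t /\<^sub>R r)" using cb by (simp add: c_def)
      have "norm (R (t /\<^sub>R r)) \<le> 1" using tn assms(2) by (simp add: Rnorm field_simps)
      then have "c \<in> C0"
        unfolding C0_def cyl_def using c1 cb \<tau> by simp
      have Rc: "R c = t /\<^sub>R r + \<tau> *\<^sub>R e"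
        by (simp add: c_def linear_add[OF R(1)] linear_scale[OF R(1)] R(2) R(4))
      have "G (M (R c)) = t + (\<tau> * H) *\<^sub>R e + \<delta>"
        using assms(2,3) by (simp add: G_def M_def Rc inner_add_left te ee algebra_simps)
      also have "\<tau> * H = z \<bullet> e - a" using assms(3) by (simp add: \<tau>_def)
      also have "t + (z \<bullet> e - a) *\<^sub>R e + \<delta> = z"
        by (simp add: \<delta>_def t_def inner_diff_left algebra_simps)
      finally show "z \<in> G ` (M ` (R ` C0))" using \<open>c \<in> C0\<close> by (metis image_eqI)
    qed
    show "G ` (M ` (R ` C0)) \<subseteq> cyl e p r a H"
    proof clarify
      fix c assume c: "c \<in> C0"
      define \<tau> where "\<tau> = c \<bullet> bvec"
      define s where "s = c - \<tau> *\<^sub>R bvec"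
      have \<tau>: "0 \<le> \<tau>" "\<tau> \<le> 1" and sn: "norm s \<le> 1"
        using c by (auto simp: C0_def cyl_def \<tau>_def s_def)
      have sb: "s \<bullet> bvec = 0" by (simp add: s_def \<tau>_def inner_diff_left bb)
      have Rse: "R s \<bullet> e = 0" by (metis R(3) R(4) sb)
      have Rc: "R c = R s + \<tau> *\<^sub>R e"
        by (metis R(1) R(4) s_def diff_add_cancel linear_add linear_scale)
      have MRc: "M (R c) = R s + (\<tau> * H / r) *\<^sub>R e"
        using assms(2) by (simp add: M_def Rc inner_add_left Rse ee algebra_simps)
      define z where "z = G (M (R c))"
      have z: "z = r *\<^sub>R R s + (\<tau> * H + a - p \<bullet> e) *\<^sub>R e + p"
        using assms(2) by (simp add: z_def G_def MRc \<delta>_def algebra_simps)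
      have ze: "z \<bullet> e = \<tau> * H + a"
        by (simp add: z inner_add_left Rse ee)
      have "(z - p) - ((z - p) \<bullet> e) *\<^sub>R e = r *\<^sub>R R s"
        by (simp add: z inner_add_left inner_diff_left Rse ee algebra_simps)
      then have "norm ((z - p) - ((z - p) \<bullet> e) *\<^sub>R e) \<le> r"
        using sn assms(2) by (simp add: Rnorm mult_le_cancel_left1)
      moreover have "a \<le> z \<bullet> e" "z \<bullet> e \<le> a + H"
        using \<tau> assms(3) by (auto simp: ze mult_le_cancel_right1)
      ultimately show "G (M (R c)) \<in> cyl e p r a H"
        by (simp add: cyl_def z_def[symmetric])
    qed
  qed
  have cC0: "compact C0" unfolding C0_def by (rule compact_cyl0)
  have cR: "compact (R ` C0)"
    by (intro compact_continuous_image linear_continuous_on cC0)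
       (simp add: linear_conv_bounded_linear[symmetric] R(1))
  have cM: "compact (M ` (R ` C0))"
    by (intro compact_continuous_image linear_continuous_on cR)
       (simp add: linear_conv_bounded_linear[symmetric] linM)
  show "compact (cyl e p r a H)"
    unfolding eqimg G_def
    by (intro compact_continuous_image cM continuous_intros)
  have "measure lebesgue (cyl e p r a H) = r ^ DIM('a) * measure lebesgue (M ` (R ` C0))"
    unfolding eqimg G_def using measure_lebesgue_affine[of r \<delta> "M ` (R ` C0)"] assms(2) by simp
  also have "measure lebesgue (M ` (R ` C0)) = \<bar>1 + ((H / r - 1) *\<^sub>R e) \<bullet> e\<bar> * measure lebesgue (R ` C0)"
    unfolding M_def by (rule measure_rank_one_image[OF cR])
  also have "\<bar>1 + ((H / r - 1) *\<^sub>R e) \<bullet> e\<bar> = H / r"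
    using assms(2,3) by (simp add: ee)
  also have "measure lebesgue (R ` C0) = ccyl TYPE('a)"
    using R(5)[OF cC0] by (simp add: C0_def ccyl_def)
  finally show "measure lebesgue (cyl e p r a H) = ccyl TYPE('a) * r ^ (DIM('a) - 1) * H"
  proof -
    assume "measure lebesgue (cyl e p r a H) = r ^ DIM('a) * (H / r * ccyl TYPE('a))"
    moreover have "r ^ DIM('a) = r * r ^ (DIM('a) - 1)"
      by (simp add: power_eq_if[of r "DIM('a)"])
    ultimately show ?thesis using assms(2) by simp
  qed
qed

abbreviation kap :: "'a::euclidean_space itself \<Rightarrow> real" where
  "kap _ \<equiv> measure lebesgue (cball (0::'a) 1)"

lemma measure_cball_scale:
  assumes "r > 0"
  shows "measure lebesgue (cball (0::'a::euclidean_space) r) = r ^ DIM('a) * kap TYPE('a)"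
proof -
  have "(\<lambda>x. r *\<^sub>R x + 0) ` cball (0::'a) 1 = cball 0 r"
    using cball_scale[of r "0::'a" 1] assms by simp
  then show ?thesis
    using measure_lebesgue_affine[of r 0 "cball (0::'a) 1"] assms by simp
qed

lemma sphere_area_eq: "sphere_area TYPE('a::euclidean_space) = DIM('a) * kap TYPE('a)"
proof -
  let ?k = "kap TYPE('a)"
  let ?d = "DIM('a)"
  have D: "((\<lambda>x::real. x ^ ?d) has_field_derivative (real ?d * 1 ^ (?d - Suc 0))) (at 1)"
    by (rule DERIV_pow)
  then have "((\<lambda>h. ((1 + h) ^ ?d - 1 ^ ?d) / h) \<longlongrightarrow> real ?d) (at 0)"
    unfolding DERIV_def by simp
  then have "((\<lambda>h. ((1 + h) ^ ?d - 1) / h) \<longlongrightarrow> real ?d) (at_right 0)"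
    by (simp add: filterlim_at_split)
  then have L: "((\<lambda>h. ((1 + h) ^ ?d - 1) / h * ?k) \<longlongrightarrow> real ?d * ?k) (at_right 0)"
    by (intro tendsto_intros)
  have ev: "\<forall>\<^sub>F h in at_right 0. ((1 + h) ^ ?d - 1) / h * ?k =
      (measure lebesgue (cball (0::'a) (1 + h)) - measure lebesgue (cball (0::'a) 1)) / h"
  proof (rule eventually_at_rightI[of 0 1])
    fix h :: real assume "h \<in> {0<..<1}"
    then have "measure lebesgue (cball (0::'a) (1 + h)) = (1 + h) ^ ?d * ?k"
      by (intro measure_cball_scale) auto
    then show "((1 + h) ^ ?d - 1) / h * ?k =
      (measure lebesgue (cball (0::'a) (1 + h)) - measure lebesgue (cball (0::'a) 1)) / h"
      by (simp add: field_simps)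
  qed simp
  have "((\<lambda>h. (measure lebesgue (cball (0::'a) (1 + h)) - measure lebesgue (cball (0::'a) 1)) / h)
      \<longlongrightarrow> real ?d * ?k) (at_right 0)"
    using tendsto_cong[OF ev] L by simp
  then show ?thesis
    unfolding sphere_area_def by (intro tendsto_Lim) auto
qed

lemma ccyl_bound:
  assumes "DIM('a::euclidean_space) \<ge> 2"
  shows "ccyl TYPE('a) \<le> DIM('a) * kap TYPE('a) / 2"
proof -
  define d where "d = DIM('a)"
  have d2: "real d \<ge> 2" using assms by (simp add: d_def)
  define r where "r = sqrt (1 - 1 / d)"
  define h where "h = 1 / sqrt d"
  have rpos: "r > 0" using d2 by (simp add: r_def)
  have hpos: "h > 0" using d2 by (simp add: h_def)
  have rh: "r\<^sup>2 + h\<^sup>2 = 1" using d2 by (simp add: r_def h_def power_divide)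
  have sub: "cyl (bvec::'a) 0 r (-h) (2 * h) \<subseteq> cball 0 1"
  proof
    fix z :: 'a assume z: "z \<in> cyl bvec 0 r (-h) (2 * h)"
    define t where "t = z - (z \<bullet> bvec) *\<^sub>R bvec"
    have tn: "norm t \<le> r" and ze: "\<bar>z \<bullet> bvec\<bar> \<le> h" using z by (auto simp: cyl_def t_def)
    have tb: "t \<bullet> bvec = 0" by (simp add: t_def inner_diff_left inner_bvec)
    have "(norm z)\<^sup>2 = (norm t)\<^sup>2 + (z \<bullet> bvec)\<^sup>2"
    proof -
      have "z = t + (z \<bullet> bvec) *\<^sub>R bvec" by (simp add: t_def)
      then have "z \<bullet> z = t \<bullet> t + (z \<bullet> bvec)\<^sup>2"
        by (metis (no_types, lifting) tb inner_add_left inner_add_right inner_bvec inner_commute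
            inner_scaleR_left inner_scaleR_right mult.right_neutral power2_eq_square add.right_neutral mult_zero_right)
      then show ?thesis by (simp add: power2_norm_eq_inner)
    qed
    also have "\<dots> \<le> r\<^sup>2 + h\<^sup>2"
    proof (rule add_mono)
      show "(norm t)\<^sup>2 \<le> r\<^sup>2" using tn by (intro power_mono) auto
      show "(z \<bullet> bvec)\<^sup>2 \<le> h\<^sup>2" using ze hpos abs_le_square_iff[of "z \<bullet> bvec" h] by simp
    qed
    finally have "(norm z)\<^sup>2 \<le> 1" using rh by simp
    then show "z \<in> cball 0 1" by (simp add: power_le_one_iff abs_le_iff)
  qed
  have "ccyl TYPE('a) * r ^ (d - 1) * (2 * h) = measure lebesgue (cyl (bvec::'a) 0 r (-h) (2 * h))"
    using cyl_measure[OF norm_bvec[where 'a='a] rpos, of "2 * h" 0 "-h"] hpos by (simp add: d_def)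
  also have "\<dots> \<le> kap TYPE('a)"
  proof (rule measure_mono_fmeasurable[OF sub])
    show "cyl (bvec::'a) 0 r (- h) (2 * h) \<in> sets lebesgue"
      using cyl_measure(1)[OF norm_bvec[where 'a='a] rpos, of "2 * h" 0 "-h"] hpos
      by (metis fmeasurableD lmeasurable_compact mult_pos_pos zero_less_numeral)
  qed (simp add: lmeasurable_cball)
  finally have A: "ccyl TYPE('a) * r ^ (d - 1) * (2 * h) \<le> kap TYPE('a)" .
  have r2: "r\<^sup>2 = 1 - 1 / d" using d2 by (simp add: r_def)
  have "(r ^ (d - 1))\<^sup>2 = (r\<^sup>2) ^ (d - 1)" by (metis power_mult mult.commute)
  also have "\<dots> = (1 - 1 / d) ^ (d - 1)" by (simp add: r2)
  also have "\<dots> = (1 + (- 1 / d)) ^ (d - 1)" by simp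
  also have "\<dots> \<ge> 1 + real (d - 1) * (- 1 / d)"
    using Bernoulli_inequality[of "- 1 / real d" "d - 1"] d2 by simp
  finally have "(r ^ (d - 1))\<^sup>2 \<ge> 1 / d" using d2 by (simp add: of_nat_diff field_simps)
  then have rb: "r ^ (d - 1) \<ge> 1 / sqrt d"
  proof -
    assume "(r ^ (d - 1))\<^sup>2 \<ge> 1 / d"
    then have "sqrt (1 / d) \<le> sqrt ((r ^ (d - 1))\<^sup>2)" by (rule real_sqrt_le_mono)
    then show ?thesis using rpos by (simp add: real_sqrt_divide)
  qed
  have c0: "ccyl TYPE('a) \<ge> 0" by (simp add: ccyl_def)
  have "ccyl TYPE('a) * (1 / sqrt d) * (2 * h) \<le> ccyl TYPE('a) * r ^ (d - 1) * (2 * h)"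
    using rb c0 hpos by (intro mult_right_mono mult_left_mono) auto
  also have "ccyl TYPE('a) * (1 / sqrt d) * (2 * h) = ccyl TYPE('a) * 2 / d"
    using d2 by (simp add: h_def field_simps)
  finally have "ccyl TYPE('a) * 2 / d \<le> kap TYPE('a)" using A by linarith
  then show ?thesis using d2 by (simp add: d_def field_simps)
qed

lemma facets_inter_lowdim:
  fixes P :: "'a::euclidean_space set"
  assumes "convex P" "F facet_of P" "G facet_of P" "F \<noteq> G"
  shows "aff_dim (F \<inter> G) < aff_dim P - 1"
proof -
  have fF: "F face_of P" and fG: "G face_of P"
    using assms by (auto simp: facet_of_imp_face_of)
  have FG: "(F \<inter> G) face_of P" using face_of_Int_Int[OF fF fG] by simp
  have FGF: "(F \<inter> G) face_of F" by (rule face_of_subset[OF FG]) (use fF face_of_imp_subset in auto)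
  have "F \<inter> G \<noteq> F"
  proof
    assume "F \<inter> G = F"
    then have "F \<subseteq> G" by auto
    then have "F face_of G" using face_of_subset[OF fF _ face_of_imp_subset[OF fG]] by blast
    then have "aff_dim F < aff_dim G"
      using face_of_aff_dim_lt[OF face_of_imp_convex[OF fG] _ assms(4)] by blast
    with assms(2,3) show False by (simp add: facet_of_def)
  qed
  then have "aff_dim (F \<inter> G) < aff_dim F"
    using face_of_aff_dim_lt[OF face_of_imp_convex[OF fF] FGF] by blast
  with assms(2) show ?thesis by (simp add: facet_of_def)
qed

lemma negligible_prism_lowdim:
  fixes K :: "'a::euclidean_space set"
  assumes "aff_dim K < int DIM('a) - 1"
  shows "negligible (prism K e T)"
proof (cases "K = {}")
  case True
  then show ?thesis by (simp add: prism_def)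
next
  case False
  then obtain k0 where k0: "k0 \<in> K" by blast
  define S where "S = insert e ((+) (- k0) ` K)"
  have "aff_dim K = int (dim ((+) (- k0) ` K))"
    by (rule aff_dim_eq_dim) (rule hull_inc[OF k0])
  moreover have "dim S \<le> dim ((+) (- k0) ` K) + 1"
    unfolding S_def by (simp add: dim_insert)
  ultimately have "dim S < DIM('a)" using assms by linarith
  then have "negligible (span S)" by (intro negligible_lowdim) simp
  then have "negligible ((+) k0 ` span S)" by (rule negligible_translation)
  moreover have "prism K e T \<subseteq> (+) k0 ` span S"
  proof
    fix z assume "z \<in> prism K e T"
    then obtain y t where y: "y \<in> K" "z = y + t *\<^sub>R e" by (auto simp: mem_prism)
    have "(y - k0) + t *\<^sub>R e \<in> span S"
      using y(1) by (intro span_add span_scale span_base) (auto simp: S_def)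
    moreover have "z = k0 + ((y - k0) + t *\<^sub>R e)" using y by simp
    ultimately show "z \<in> (+) k0 ` span S" by blast
  qed
  ultimately show ?thesis by (rule negligible_subset)
qed

lemma prism_inter_subset:
  fixes P :: "'a::euclidean_space set"
  assumes "F \<subseteq> P" "G \<subseteq> P" "P \<subseteq> {z. uF \<bullet> z \<le> bF}" "F \<subseteq> {z. uF \<bullet> z = bF}" "uF \<bullet> e > 0"
     "P \<subseteq> {z. uG \<bullet> z \<le> bG}" "G \<subseteq> {z. uG \<bullet> z = bG}" "uG \<bullet> e > 0"
  shows "prism F e T \<inter> prism G e T \<subseteq> prism (F \<inter> G) e T"
proof
  fix z assume "z \<in> prism F e T \<inter> prism G e T"
  then obtain y t y' t' where y: "y \<in> F" "0 \<le> t" "t \<le> T" "z = y + t *\<^sub>R e"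
    and y': "y' \<in> G" "0 \<le> t'" "t' \<le> T" "z = y' + t' *\<^sub>R e"
    by (auto simp: mem_prism)
  have "t = t'"
  proof (rule ccontr)
    assume "t \<noteq> t'"
    then consider "t > t'" | "t < t'" by linarith
    then show False
    proof cases
      case 1
      have "y' = y + (t - t') *\<^sub>R e" using y(4) y'(4) by (simp add: algebra_simps)
      then have "uF \<bullet> y' = bF + (t - t') * (uF \<bullet> e)"
        using y(1) assms(4) by (auto simp: inner_add_right)
      moreover have "(t - t') * (uF \<bullet> e) > 0" using 1 assms(5) by simp
      moreover have "uF \<bullet> y' \<le> bF" using y'(1) assms(2,3) by auto
      ultimately show False by linarith
    next
      case 2
      have "y = y' + (t' - t) *\<^sub>R e" using y(4) y'(4) by (simp add: algebra_simps)
      then have "uG \<bullet> y = bG + (t' - t) * (uG \<bullet> e)"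
        using y'(1) assms(7) by (auto simp: inner_add_right)
      moreover have "(t' - t) * (uG \<bullet> e) > 0" using 2 assms(8) by simp
      moreover have "uG \<bullet> y \<le> bG" using y(1) assms(1,6) by auto
      ultimately show False by linarith
    qed
  qed
  then have "y = y'" using y(4) y'(4) by simp
  then show "z \<in> prism (F \<inter> G) e T" using y y' by (auto simp: mem_prism)
qed


lemma proj_bound:
  fixes P :: "'a::euclidean_space set" and e p :: 'a and u :: "'a set \<Rightarrow> 'a" and b :: "'a set \<Rightarrow> real"
  assumes "convex P" "aff_dim P = int DIM('a)" "finite \<F>" "\<And>F. F \<in> \<F> \<Longrightarrow> F facet_of P"
    "norm e = 1" "r > 0"
    and nrm: "\<And>F. F \<in> \<F> \<Longrightarrow> norm (u F) = 1 \<and> P \<subseteq> {z. u F \<bullet> z \<le> b F} \<and> F \<subseteq> {z. u F \<bullet> z = b F}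
           \<and> u F \<bullet> e > 0 \<and> compact F"
    and loc: "\<And>F y. F \<in> \<F> \<Longrightarrow> y \<in> F \<Longrightarrow>
           norm ((y - p) - ((y - p) \<bullet> e) *\<^sub>R e) \<le> r \<and> -1 \<le> y \<bullet> e \<and> y \<bullet> e \<le> 1"
  shows "(\<Sum>F\<in>\<F>. (u F \<bullet> e) * flat_area F) \<le> ccyl TYPE('a) * r ^ (DIM('a) - 1)"
proof -
  define C where "C = ccyl TYPE('a) * r ^ (DIM('a) - 1)"
  define \<Sigma> where "\<Sigma> = (\<Sum>F\<in>\<F>. (u F \<bullet> e) * flat_area F)"
  have C0: "C \<ge> 0" using assms(6) by (simp add: C_def ccyl_def)
  have ee: "e \<bullet> e = 1" using assms(5) by (simp add: norm_eq_1)
  have key: "T * \<Sigma> \<le> C * (T + 2)" if T: "T > 0" for T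
  proof -
    define U where "U = (\<Union>F\<in>\<F>. prism F e T)"
    have cF: "compact F" if "F \<in> \<F>" for F using nrm[OF that] by blast
    have mp: "measure lebesgue (prism F e T) = T * ((u F \<bullet> e) * flat_area F)" if F: "F \<in> \<F>" for F
    proof -
      have f: "F facet_of P" using assms(4) F by blast
      have "measure lebesgue (prism F e T) = \<bar>T * (u F \<bullet> e)\<bar> * measure lebesgue (prism F (u F) 1)"
        using nrm[OF F] T by (intro oblique_prism_measure) auto
      also have "measure lebesgue (prism F (u F) 1) = flat_area F"
        using nrm[OF F] f assms(2) by (intro flat_area_eq[symmetric]) (auto simp: facet_of_def)
      also have "\<bar>T * (u F \<bullet> e)\<bar> = T * (u F \<bullet> e)" using nrm[OF F] T by simp
      finally show ?thesis by simp
    qed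
    have "measure lebesgue U = (\<Sum>F\<in>\<F>. measure lebesgue (prism F e T))"
      unfolding U_def
    proof (rule measure_negligible_finite_Union_image[OF assms(3)])
      show "prism F e T \<in> lmeasurable" if "F \<in> \<F>" for F
        by (intro lmeasurable_compact compact_prism cF that)
      show "pairwise (\<lambda>F G. negligible (prism F e T \<inter> prism G e T)) \<F>"
        unfolding pairwise_def
      proof clarify
        fix F G assume F: "F \<in> \<F>" and G: "G \<in> \<F>" and FG: "F \<noteq> G"
        have "prism F e T \<inter> prism G e T \<subseteq> prism (F \<inter> G) e T"
          using nrm[OF F] nrm[OF G] assms(4)[OF F] assms(4)[OF G]
          by (intro prism_inter_subset[where P=P and uF="u F" and bF="b F" and uG="u G" and bG="b G"]) (auto dest: facet_of_imp_subset)
        moreover have "negligible (prism (F \<inter> G) e T)"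
          using facets_inter_lowdim[OF assms(1) assms(4)[OF F] assms(4)[OF G] FG] assms(2)
          by (intro negligible_prism_lowdim) simp
        ultimately show "negligible (prism F e T \<inter> prism G e T)" by (rule negligible_subset[rotated])
      qed
    qed
    also have "\<dots> = T * \<Sigma>" by (simp add: mp \<Sigma>_def sum_distrib_left)
    finally have mU: "measure lebesgue U = T * \<Sigma>" .
    have sub: "U \<subseteq> cyl e p r (-1) (T + 2)"
    proof
      fix z assume "z \<in> U"
      then obtain F y t where F: "F \<in> \<F>" and y: "y \<in> F" "0 \<le> t" "t \<le> T" "z = y + t *\<^sub>R e"
        by (auto simp: U_def mem_prism)
      have eq: "(z - p) - ((z - p) \<bullet> e) *\<^sub>R e = (y - p) - ((y - p) \<bullet> e) *\<^sub>R e"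
        using y(4) by (simp add: inner_add_left inner_diff_left ee algebra_simps)
      have n: "norm ((z - p) - ((z - p) \<bullet> e) *\<^sub>R e) \<le> r"
        by (subst eq) (use loc[OF F y(1)] in blast)
      have ze: "z \<bullet> e = y \<bullet> e + t" using y(4) ee by (simp add: inner_add_left)
      show "z \<in> cyl e p r (-1) (T + 2)"
        unfolding cyl_def mem_Collect_eq
        by (intro conjI n) (use ze loc[OF F y(1)] y(2,3) in linarith)+
    qed
    have cU: "compact U" unfolding U_def
      by (intro compact_UN assms(3) compact_prism cF)
    have "T + 2 > 0" using T by simp
    have "measure lebesgue U \<le> measure lebesgue (cyl e p r (-1) (T + 2))"
      by (rule measure_mono_fmeasurable[OF sub])
         (auto intro: lmeasurable_compact fmeasurableD cU cyl_measure(1)[OF assms(5,6) \<open>T + 2 > 0\<close>])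
    also have "\<dots> = C * (T + 2)"
      using cyl_measure(2)[OF assms(5,6) \<open>T + 2 > 0\<close>] by (simp add: C_def)
    finally show ?thesis using mU by simp
  qed
  have "\<Sigma> \<le> C"
  proof (rule field_le_epsilon)
    fix \<epsilon> :: real assume \<epsilon>: "\<epsilon> > 0"
    define T where "T = (2 * C + 1) / \<epsilon>"
    have T: "T > 0" using C0 \<epsilon> by (simp add: T_def)
    have "T * \<Sigma> \<le> C * (T + 2)" by (rule key[OF T])
    then have "\<Sigma> \<le> C + 2 * C / T" using T by (simp add: field_simps)
    also have "2 * C / T = 2 * C * \<epsilon> / (2 * C + 1)" using C0 \<epsilon> by (simp add: T_def)
    also have "\<dots> \<le> \<epsilon>" using C0 \<epsilon> by (simp add: field_simps)
    finally show "\<Sigma> \<le> C + \<epsilon>" by simp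
  qed
  then show ?thesis by (simp add: \<Sigma>_def C_def)
qed

lemma facet_normal:
  fixes P :: "'a::euclidean_space set"
  assumes "polyhedron P" "F facet_of P"
  obtains u b where "norm u = 1" "P \<subseteq> {z. u \<bullet> z \<le> b}" "F = P \<inter> {z. u \<bullet> z = b}"
proof -
  obtain a b where ab: "a \<noteq> 0" "P \<subseteq> {x. a \<bullet> x \<le> b}" "F = P \<inter> {x. a \<bullet> x = b}"
    using facet_of_polyhedron[OF assms] by metis
  define u where "u = a /\<^sub>R norm a"
  define c where "c = b / norm a"
  have na: "norm a > 0" using ab(1) by simp
  have eq1: "(u \<bullet> z \<le> c) \<longleftrightarrow> (a \<bullet> z \<le> b)" for z
    using na by (simp add: u_def c_def divide_le_cancel field_simps)
  have eq2: "(u \<bullet> z = c) \<longleftrightarrow> (a \<bullet> z = b)" for z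
    using na by (simp add: u_def c_def field_simps)
  show ?thesis
  proof (rule that)
    show "norm u = 1" using na by (simp add: u_def)
    show "P \<subseteq> {z. u \<bullet> z \<le> c}" using ab(2) eq1 by auto
    show "F = P \<inter> {z. u \<bullet> z = c}" using ab(3) eq2 by auto
  qed
qed

lemma cap_height_ge:
  fixes P F :: "'a::euclidean_space set"
  assumes "norm u = 1" "affine hull F = {z. u \<bullet> z = b}" "P \<subseteq> {z. u \<bullet> z \<le> b}" "y0 \<in> F"
    "F \<subseteq> cball 0 1" "b \<le> 1"
  shows "1 - b \<le> cap_height P F"
proof -
  define A where "A = {infdist x (affine hull F) | x. x \<in> cball 0 1 \<inter> outer_halfspace P F}"
  have uu: "u \<bullet> u = 1" using assms(1) by (simp add: norm_eq_1)
  have uo: "u \<in> outer_halfspace P F"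
    unfolding outer_halfspace_def using assms(1,2,3,6) uu by (intro CollectI exI[of _ u] exI[of _ b]) auto
  have uc: "u \<in> cball 0 1" using assms(1) by simp
  have ne: "affine hull F \<noteq> {}" using assms(4) hull_inc by fastforce
  have inf: "1 - b \<le> infdist u (affine hull F)"
    unfolding infdist_notempty[OF ne]
  proof (rule cINF_greatest[OF ne])
    fix a assume "a \<in> affine hull F"
    then have "u \<bullet> a = b" using assms(2) by auto
    then have "1 - b = u \<bullet> (u - a)" by (simp add: inner_diff_right uu)
    also have "\<dots> \<le> norm u * norm (u - a)" by (rule norm_cauchy_schwarz)
    finally show "1 - b \<le> dist u a" using assms(1) by (simp add: dist_norm)
  qed
  have bdd: "bdd_above A"
  proof (rule bdd_aboveI)
    fix y assume "y \<in> A"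
    then obtain x where x: "y = infdist x (affine hull F)" "x \<in> cball 0 1" by (auto simp: A_def)
    have "y \<le> dist x y0" using x(1) infdist_le[OF hull_inc[OF assms(4)]] by simp
    also have "\<dots> \<le> norm x + norm y0" by (simp add: dist_norm norm_triangle_ineq4)
    also have "\<dots> \<le> 2" using x(2) assms(4,5) by (auto intro: add_mono)
    finally show "y \<le> 2" .
  qed
  have "infdist u (affine hull F) \<in> A" using uo uc by (auto simp: A_def)
  then have "infdist u (affine hull F) \<le> Sup A" by (rule cSup_upper[OF _ bdd])
  then show ?thesis using inf by (simp add: cap_height_def A_def)
qed

lemma sum_abs_Basis_ge1:
  fixes u :: "'a::euclidean_space"
  assumes "norm u = 1"
  shows "1 \<le> (\<Sum>b\<in>Basis. \<bar>u \<bullet> b\<bar>)"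
proof -
  have "1 = u \<bullet> u" using assms by (simp add: norm_eq_1)
  also have "\<dots> = (\<Sum>b\<in>Basis. (u \<bullet> b) * (u \<bullet> b))" by (rule euclidean_inner)
  also have "\<dots> \<le> (\<Sum>b\<in>Basis. \<bar>u \<bullet> b\<bar>)"
  proof (rule sum_mono)
    fix b :: 'a assume "b \<in> Basis"
    then have "\<bar>u \<bullet> b\<bar> \<le> 1" using Basis_le_norm[of b u] assms by simp
    then have "\<bar>u \<bullet> b\<bar> * \<bar>u \<bullet> b\<bar> \<le> \<bar>u \<bullet> b\<bar>" by (rule mult_left_le) auto
    then show "(u \<bullet> b) * (u \<bullet> b) \<le> \<bar>u \<bullet> b\<bar>" using abs_mult_self_eq[of "u \<bullet> b"] by linarith
  qed
  finally show ?thesis .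
qed

lemma norm_perp_le:
  fixes y e :: "'a::euclidean_space"
  assumes "norm e = 1"
  shows "norm (y - (y \<bullet> e) *\<^sub>R e) \<le> norm y"
proof -
  have ee: "e \<bullet> e = 1" using assms by (simp add: norm_eq_1)
  define t where "t = y - (y \<bullet> e) *\<^sub>R e"
  have te: "t \<bullet> e = 0" by (simp add: t_def inner_diff_left ee)
  have "y \<bullet> y = t \<bullet> t + (y \<bullet> e) * (y \<bullet> e)"
  proof -
    have "y = t + (y \<bullet> e) *\<^sub>R e" by (simp add: t_def)
    then have "y \<bullet> y = (t + (y \<bullet> e) *\<^sub>R e) \<bullet> (t + (y \<bullet> e) *\<^sub>R e)" by simp
    also have "\<dots> = t \<bullet> t + (y \<bullet> e) * (y \<bullet> e)"
      using te by (simp add: inner_add_left inner_add_right ee inner_commute[of e t])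
    finally show ?thesis .
  qed
  then have "t \<bullet> t \<le> y \<bullet> y" by simp
  then have "(norm t)\<^sup>2 \<le> (norm y)\<^sup>2" by (simp add: power2_norm_eq_inner)
  then show ?thesis unfolding t_def[symmetric] by (simp add: power2_le_iff_abs_le)
qed

lemma basis_dir_bound:
  fixes P :: "'a::euclidean_space set" and nu :: "'a set \<Rightarrow> 'a" and be :: "'a set \<Rightarrow> real"
  assumes "convex P" "aff_dim P = int DIM('a)" "finite \<F>" "\<And>F. F \<in> \<F> \<Longrightarrow> F facet_of P"
    "P \<subseteq> cball 0 1" "norm e = 1"
    and nrm: "\<And>F. F \<in> \<F> \<Longrightarrow> norm (nu F) = 1 \<and> P \<subseteq> {z. nu F \<bullet> z \<le> be F} \<and> F \<subseteq> {z. nu F \<bullet> z = be F}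
           \<and> compact F"
  shows "(\<Sum>F\<in>{F\<in>\<F>. nu F \<bullet> e > 0}. (nu F \<bullet> e) * flat_area F) \<le> ccyl TYPE('a)"
proof -
  have "(\<Sum>F\<in>{F\<in>\<F>. nu F \<bullet> e > 0}. (nu F \<bullet> e) * flat_area F) \<le> ccyl TYPE('a) * 1 ^ (DIM('a) - 1)"
  proof (rule proj_bound[where P=P and p=0 and u=nu and b=be])
    show "finite {F \<in> \<F>. 0 < nu F \<bullet> e}" using assms(3) by simp
    fix F assume F: "F \<in> {F \<in> \<F>. 0 < nu F \<bullet> e}"
    show "F facet_of P" using F assms(4) by auto
    show "norm (nu F) = 1 \<and> P \<subseteq> {z. nu F \<bullet> z \<le> be F} \<and> F \<subseteq> {z. nu F \<bullet> z = be F}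
           \<and> 0 < nu F \<bullet> e \<and> compact F" using nrm F by auto
    fix y assume y: "y \<in> F"
    have yP: "norm y \<le> 1" using y F assms(4,5) facet_of_imp_subset by fastforce
    have "norm ((y - 0) - ((y - 0) \<bullet> e) *\<^sub>R e) \<le> 1"
      using norm_perp_le[OF assms(6), of y] yP by simp
    moreover have "\<bar>y \<bullet> e\<bar> \<le> 1" using Cauchy_Schwarz_ineq2[of y e] assms(6) yP by simp
    ultimately show "norm ((y - 0) - ((y - 0) \<bullet> e) *\<^sub>R e) \<le> 1 \<and> - 1 \<le> y \<bullet> e \<and> y \<bullet> e \<le> 1"
      by linarith
  qed (use assms in auto)
  then show ?thesis by simp
qed

lemma surface_bound:
  fixes P :: "'a::euclidean_space set" and nu :: "'a set \<Rightarrow> 'a" and be :: "'a set \<Rightarrow> real"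
  assumes "convex P" "aff_dim P = int DIM('a)" "finite \<F>" "\<And>F. F \<in> \<F> \<Longrightarrow> F facet_of P"
    "P \<subseteq> cball 0 1"
    and nrm: "\<And>F. F \<in> \<F> \<Longrightarrow> norm (nu F) = 1 \<and> P \<subseteq> {z. nu F \<bullet> z \<le> be F} \<and> F \<subseteq> {z. nu F \<bullet> z = be F}
           \<and> compact F"
    and nonneg: "\<And>F. F \<in> \<F> \<Longrightarrow> flat_area F \<ge> 0"
  shows "(\<Sum>F\<in>\<F>. flat_area F) \<le> DIM('a) * (2 * ccyl TYPE('a))"
proof -
  have per: "(\<Sum>F\<in>\<F>. \<bar>nu F \<bullet> b\<bar> * flat_area F) \<le> 2 * ccyl TYPE('a)" if b: "b \<in> Basis" for b
  proof -
    have nb: "norm b = 1" "norm (- b) = 1" using b by auto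
    have "(\<Sum>F\<in>\<F>. \<bar>nu F \<bullet> b\<bar> * flat_area F) =
          (\<Sum>F\<in>\<F>. (if nu F \<bullet> b > 0 then (nu F \<bullet> b) * flat_area F else 0)) +
          (\<Sum>F\<in>\<F>. (if nu F \<bullet> (-b) > 0 then (nu F \<bullet> (-b)) * flat_area F else 0))"
      by (subst sum.distrib[symmetric]) (rule sum.cong, auto)
    also have "\<dots> = (\<Sum>F\<in>{F\<in>\<F>. nu F \<bullet> b > 0}. (nu F \<bullet> b) * flat_area F) +
          (\<Sum>F\<in>{F\<in>\<F>. nu F \<bullet> (-b) > 0}. (nu F \<bullet> (-b)) * flat_area F)"
      using assms(3) by (simp add: sum.inter_filter) (rule sum.cong, auto)
    also have "\<dots> \<le> ccyl TYPE('a) + ccyl TYPE('a)"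
      by (intro add_mono basis_dir_bound[OF assms(1-5), where be=be] nb) (use nrm in auto)
    finally show ?thesis by simp
  qed
  have "(\<Sum>F\<in>\<F>. flat_area F) \<le> (\<Sum>F\<in>\<F>. (\<Sum>b\<in>Basis. \<bar>nu F \<bullet> b\<bar>) * flat_area F)"
  proof (rule sum_mono)
    fix F assume F: "F \<in> \<F>"
    have "1 \<le> (\<Sum>b\<in>Basis. \<bar>nu F \<bullet> b\<bar>)" using nrm[OF F] sum_abs_Basis_ge1 by blast
    then show "flat_area F \<le> (\<Sum>b\<in>Basis. \<bar>nu F \<bullet> b\<bar>) * flat_area F"
      using nonneg[OF F] by (simp add: mult_le_cancel_right1)
  qed
  also have "\<dots> = (\<Sum>b\<in>Basis. \<Sum>F\<in>\<F>. \<bar>nu F \<bullet> b\<bar> * flat_area F)"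
    by (simp add: sum_distrib_right sum.swap[of _ \<F>])
  also have "\<dots> \<le> (\<Sum>b\<in>(Basis::'a set). 2 * ccyl TYPE('a))"
    by (rule sum_mono) (rule per)
  also have "\<dots> = DIM('a) * (2 * ccyl TYPE('a))" by simp
  finally show ?thesis .
qed

lemma close_points:
  fixes x y u :: "'a::euclidean_space"
  assumes "norm u = 1" "u \<bullet> x = \<beta>" "u \<bullet> y = \<beta>" "norm x = 1" "norm y \<le> 1" "\<beta> \<le> 1" "1 - \<beta> \<le> t"
  shows "(norm (y - x))\<^sup>2 \<le> 8 * t"
proof -
  have uu: "u \<bullet> u = 1" using assms(1) by (simp add: norm_eq_1)
  define x' where "x' = x - \<beta> *\<^sub>R u"
  define y' where "y' = y - \<beta> *\<^sub>R u"
  have "x' \<bullet> x' = x \<bullet> x - \<beta>\<^sup>2"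
    by (simp add: x'_def inner_diff_left inner_diff_right assms(2) uu inner_commute power2_eq_square)
  then have nx: "x' \<bullet> x' = 1 - \<beta>\<^sup>2" using assms(4) by (simp add: norm_eq_1)
  have "y' \<bullet> y' = y \<bullet> y - \<beta>\<^sup>2"
    by (simp add: y'_def inner_diff_left inner_diff_right assms(3) uu inner_commute power2_eq_square)
  moreover have "y \<bullet> y \<le> 1"
  proof -
    have "(norm y)\<^sup>2 \<le> 1" using assms(5) by (simp add: power_le_one)
    then show ?thesis by (simp add: power2_norm_eq_inner)
  qed
  ultimately have ny: "y' \<bullet> y' \<le> 1 - \<beta>\<^sup>2" by simp
  have "y - x = y' - x'" by (simp add: x'_def y'_def)
  then have "(norm (y - x))\<^sup>2 = (y' - x') \<bullet> (y' - x')" by (simp add: power2_norm_eq_inner)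
  also have "\<dots> \<le> 2 * (y' \<bullet> y') + 2 * (x' \<bullet> x')"
  proof -
    have "0 \<le> (y' + x') \<bullet> (y' + x')" by simp
    then show ?thesis by (simp add: inner_add_left inner_add_right inner_diff_left inner_diff_right inner_commute)
  qed
  also have "\<dots> \<le> 4 * (1 - \<beta>\<^sup>2)" using nx ny by simp
  also have "\<dots> = 4 * (1 - \<beta>) * (1 + \<beta>)" by (simp add: power2_eq_square algebra_simps)
  also have "\<dots> \<le> 4 * t * 2"
  proof -
    have "1 - \<beta>\<^sup>2 \<ge> 0" using nx by (metis inner_ge_zero)
    then have "\<beta>\<^sup>2 \<le> 1" by simp
    then have "\<bar>\<beta>\<bar> \<le> 1" by (simp add: abs_square_le_1)
    then have "-1 \<le> \<beta>" by linarith
    then show ?thesis using assms(6,7) by (intro mult_mono) auto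
  qed
  finally show ?thesis by simp
qed

theorem lemma8:
  fixes X :: "'a::euclidean_space set" and P :: "'a set"
  assumes "DIM('a) \<ge> 2"
    and "finite X" and "X \<subseteq> sphere 0 1"
    and "P = convex hull X"
    and "interior P \<noteq> {}"
    and "\<forall>F. F facet_of P \<longrightarrow>
           (\<exists>S. S \<subseteq> X \<and> card S = DIM('a) \<and> \<not> affine_dependent S \<and> F = convex hull S)"
  shows "(\<Sum>F\<in>{F. F facet_of P \<and>
              cap_height P F \<le> 1/8 * ((polytope_surface_area P / sphere_area TYPE('a))
                                        * (1 / (4 * real (card X)))) powr (2 / (real DIM('a) - 1))}.
            flat_area F)
         \<le> 1/4 * polytope_surface_area P"
proof -
  let ?Fs = "{F. F facet_of P}"
  define S where "S = polytope_surface_area P"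
  define \<omega> where "\<omega> = sphere_area TYPE('a)"
  define n where "n = card X"
  define q where "q = (S / \<omega>) * (1 / (4 * real n))"
  define t0 where "t0 = 1/8 * q powr (2 / (real DIM('a) - 1))"
  define N where "N = {F. F facet_of P \<and> cap_height P F \<le> t0}"
  have goal_eq: "?thesis \<longleftrightarrow> (\<Sum>F\<in>N. flat_area F) \<le> 1/4 * S"
    by (simp add: N_def t0_def q_def S_def \<omega>_def n_def)
  have poly: "polytope P" using assms(2,4) polytope_convex_hull by simp
  have cvx: "convex P" using assms(4) by simp
  have adP: "aff_dim P = int DIM('a)" using aff_dim_nonempty_interior[OF assms(5)] .
  have polyh: "polyhedron P" using poly polytope_imp_polyhedron by blast
  have finFs: "finite ?Fs"
    by (rule finite_subset[OF _ finite_polytope_faces[OF poly]]) (auto simp: facet_of_imp_face_of)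
  have Pball: "P \<subseteq> cball 0 1"
    unfolding assms(4) using assms(3) by (intro hull_minimal) (auto simp: convex_cball)
  have Xn: "norm x = 1" if "x \<in> X" for x using assms(3) that by auto
  have "\<forall>F. \<exists>u b. F facet_of P \<longrightarrow> norm u = 1 \<and> P \<subseteq> {z. u \<bullet> z \<le> b} \<and> F = P \<inter> {z. u \<bullet> z = b}"
    using facet_normal[OF polyh] by metis
  then obtain nu be where nb: "\<And>F. F facet_of P \<Longrightarrow>
      norm (nu F) = 1 \<and> P \<subseteq> {z. nu F \<bullet> z \<le> be F} \<and> F = P \<inter> {z. nu F \<bullet> z = be F}"
    by metis
  have cP: "compact P" using poly polytope_imp_compact by blast
  have fct: "F \<noteq> {} \<and> aff_dim F = int DIM('a) - 1 \<and> compact F \<and> F \<subseteq> {z. nu F \<bullet> z = be F}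
      \<and> F \<subseteq> cball 0 1 \<and> affine hull F = {z. nu F \<bullet> z = be F} \<and> be F \<le> 1
      \<and> 1 - be F \<le> cap_height P F \<and> (\<exists>x\<in>X. x \<in> F) \<and> F \<subseteq> P"
    if F: "F facet_of P" for F
  proof -
    have ne: "F \<noteq> {}" and ad: "aff_dim F = int DIM('a) - 1" using F adP by (auto simp: facet_of_def)
    have nbF: "norm (nu F) = 1" "P \<subseteq> {z. nu F \<bullet> z \<le> be F}" "F = P \<inter> {z. nu F \<bullet> z = be F}"
      using nb[OF F] by auto
    have cF: "compact F" by (subst nbF(3)) (rule compact_Int_closed[OF cP closed_hyperplane])
    have sub: "F \<subseteq> {z. nu F \<bullet> z = be F}" using nbF(3) by auto
    have FP: "F \<subseteq> P" using nbF(3) by auto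
    have Fb: "F \<subseteq> cball 0 1" using FP Pball by auto
    have AH: "affine hull F = {z. nu F \<bullet> z = be F}"
    proof -
      have "nu F \<noteq> 0" using nbF(1) by auto
      then show ?thesis using affine_hull_hyp[OF ne sub _ ad] by blast
    qed
    obtain y0 where y0: "y0 \<in> F" using ne by blast
    have "be F = nu F \<bullet> y0" using sub y0 by auto
    also have "\<dots> \<le> norm (nu F) * norm y0" by (rule norm_cauchy_schwarz)
    also have "\<dots> \<le> 1" using nbF(1) y0 Fb by auto
    finally have b1: "be F \<le> 1" .
    have ch: "1 - be F \<le> cap_height P F"
      by (rule cap_height_ge[OF nbF(1) AH nbF(2) y0 Fb b1])
    obtain S' where S': "S' \<subseteq> X" "card S' = DIM('a)" "F = convex hull S'" using assms(6) F by blast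
    have "S' \<noteq> {}" using S'(2) by auto
    then obtain x where "x \<in> S'" by blast
    then have "x \<in> X \<and> x \<in> F" using S' hull_inc by fastforce
    then show ?thesis using ne ad cF sub Fb AH b1 ch FP by blast
  qed
  have A0: "flat_area F \<ge> 0" for F :: "'a set"
    by (simp add: flat_area_def Let_def)
  have S_def': "S = (\<Sum>F\<in>?Fs. flat_area F)" by (simp add: S_def polytope_surface_area_def)
  have finN: "finite N" using finFs by (rule finite_subset[rotated]) (auto simp: N_def)
  show ?thesis
  proof (cases "S = 0")
    case True
    then have "\<forall>F\<in>?Fs. flat_area F = 0"
      using sum_nonneg_eq_0_iff[OF finFs, of flat_area] A0 S_def' by auto
    then have "(\<Sum>F\<in>N. flat_area F) = 0" by (intro sum.neutral) (auto simp: N_def)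
    then show ?thesis using True goal_eq by simp
  next
    case False
    have S0: "S \<ge> 0" using S_def' A0 by (simp add: sum_nonneg)
    then have Spos: "S > 0" using False by simp
    have "?Fs \<noteq> {}" proof assume "?Fs = {}" then have "S = 0" using S_def' by simp then show False using False by simp qed
    then obtain F0 where F0: "F0 facet_of P" by blast
    obtain S' where S': "S' \<subseteq> X" "card S' = DIM('a)" using assms(6) F0 by blast
    have dn: "DIM('a) \<le> n" unfolding n_def using card_mono[OF assms(2) S'(1)] S'(2) by simp
    have npos: "real n > 0" using dn assms(1) by simp
    have kpos: "kap TYPE('a) > 0"
      using content_cball_pos[of 1 "0::'a"] by simp
    have \<omega>eq: "\<omega> = DIM('a) * kap TYPE('a)" by (simp add: \<omega>_def sphere_area_eq)
    have \<omega>pos: "\<omega> > 0" using kpos by (simp add: \<omega>eq)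
    have cc: "ccyl TYPE('a) \<le> DIM('a) * kap TYPE('a) / 2" by (rule ccyl_bound[OF assms(1)])
    have Sb: "S \<le> DIM('a) * (2 * ccyl TYPE('a))"
      unfolding S_def'
    proof (rule surface_bound[OF cvx adP finFs _ Pball, where nu=nu and be=be])
      fix F assume "F \<in> ?Fs"
      then have F: "F facet_of P" by simp
      show "norm (nu F) = 1 \<and> P \<subseteq> {z. nu F \<bullet> z \<le> be F} \<and> F \<subseteq> {z. nu F \<bullet> z = be F} \<and> compact F"
        using nb[OF F] fct[OF F] by blast
    qed (auto simp: A0)
    have S\<omega>: "S \<le> DIM('a) * \<omega>"
    proof -
      have "S \<le> DIM('a) * (2 * ccyl TYPE('a))" by (rule Sb)
      also have "\<dots> \<le> DIM('a) * (DIM('a) * kap TYPE('a))" using cc by simp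
      finally show ?thesis by (simp add: \<omega>eq)
    qed
    have qpos: "q > 0" using Spos \<omega>pos npos by (simp add: q_def)
    have q14: "q \<le> 1/4"
    proof -
      have "q = S / (4 * real n * \<omega>)" by (simp add: q_def field_simps)
      also have "\<dots> \<le> (DIM('a) * \<omega>) / (4 * real n * \<omega>)"
        using S\<omega> npos \<omega>pos by (intro divide_right_mono) auto
      also have "\<dots> = DIM('a) / (4 * real n)" using \<omega>pos by simp
      also have "\<dots> \<le> 1/4" using dn npos by (simp add: field_simps)
      finally show ?thesis .
    qed
    have d1: "real DIM('a) - 1 > 0" using assms(1) by simp
    have t0le: "t0 \<le> 1/8"
    proof -
      have "q powr (2 / (real DIM('a) - 1)) \<le> 1"
        using qpos q14 d1 by (intro powr_le1) auto
      then show ?thesis by (simp add: t0_def)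
    qed
    have t0pos: "t0 > 0" using qpos by (simp add: t0_def)
    define \<rho> where "\<rho> = sqrt (8 * t0)"
    have \<rho>pos: "\<rho> > 0" using t0pos by (simp add: \<rho>_def)
    have \<rho>2: "\<rho>\<^sup>2 = 8 * t0" using t0pos by (simp add: \<rho>_def)
    have \<rho>q: "\<rho> ^ (DIM('a) - 1) = q"
    proof -
      have "8 * t0 = q powr (2 / (real DIM('a) - 1))" by (simp add: t0_def)
      then have "\<rho> = sqrt (q powr (2 / (real DIM('a) - 1)))" by (simp add: \<rho>_def)
      also have "\<dots> = q powr ((2 / (real DIM('a) - 1)) / 2)"
        by (rule powr_half_sqrt_powr[symmetric]) (use qpos in simp)
      also have "\<dots> = q powr (1 / (real DIM('a) - 1))" by (rule arg_cong[where f="\<lambda>a. q powr a"]) (use d1 in \<open>simp add: field_simps\<close>)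
      finally have rr: "\<rho> = q powr (1 / (real DIM('a) - 1))" .
      have "(q powr (1 / (real DIM('a) - 1))) powr (real (DIM('a) - 1)) = (q powr (1 / (real DIM('a) - 1))) ^ (DIM('a) - 1)"
        by (rule powr_realpow) (use qpos in simp)
      then have "\<rho> ^ (DIM('a) - 1) = (q powr (1 / (real DIM('a) - 1))) powr (real (DIM('a) - 1))"
        by (simp only: rr)
      also have "\<dots> = q powr (1 / (real DIM('a) - 1) * real (DIM('a) - 1))" by (simp add: powr_powr)
      also have "1 / (real DIM('a) - 1) * real (DIM('a) - 1) = 1"
        using assms(1) d1 by (simp add: of_nat_diff)
      finally show ?thesis using qpos by simp
    qed
    have vb: "(\<Sum>F\<in>{F\<in>N. x \<in> F}. flat_area F) \<le> \<omega> * q" if x: "x \<in> X" for x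
    proof -
      define G where "G = {F\<in>N. x \<in> F}"
      have finG: "finite G" using finN by (simp add: G_def)
      have xn: "norm x = 1" using Xn[OF x] .
      have Gfacts: "F facet_of P \<and> 1 - t0 \<le> be F" if "F \<in> G" for F
      proof -
        have F: "F facet_of P" "cap_height P F \<le> t0" using that by (auto simp: G_def N_def)
        then show ?thesis using fct[OF F(1)] by linarith
      qed
      have xb: "nu F \<bullet> x = be F" if "F \<in> G" for F
        using that fct[OF conjunct1[OF Gfacts[OF that]]] by (auto simp: G_def)
      have pb: "(\<Sum>F\<in>G. (nu F \<bullet> x) * flat_area F) \<le> ccyl TYPE('a) * \<rho> ^ (DIM('a) - 1)"
      proof (rule proj_bound[OF cvx adP finG _ xn \<rho>pos, where u=nu and b=be and p=x])
        fix F assume F: "F \<in> G"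
        have Ff: "F facet_of P" using Gfacts[OF F] by blast
        then show "F facet_of P" .
        have "nu F \<bullet> x > 0" using xb[OF F] Gfacts[OF F] t0le by linarith
        then show "norm (nu F) = 1 \<and> P \<subseteq> {z. nu F \<bullet> z \<le> be F} \<and> F \<subseteq> {z. nu F \<bullet> z = be F}
           \<and> nu F \<bullet> x > 0 \<and> compact F"
          using nb[OF Ff] fct[OF Ff] by blast
        fix y assume y: "y \<in> F"
        have yn: "norm y \<le> 1" using y fct[OF Ff] by auto
        have "(norm (y - x))\<^sup>2 \<le> 8 * t0"
          using close_points[of "nu F" x "be F" y t0] nb[OF Ff] fct[OF Ff] y xb[OF F] xn yn Gfacts[OF F]
          by auto
        then have "norm (y - x) \<le> \<rho>" using \<rho>2 \<rho>pos by (metis abs_norm_cancel power2_le_iff_abs_le less_imp_le)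
        moreover have "norm ((y - x) - ((y - x) \<bullet> x) *\<^sub>R x) \<le> norm (y - x)" by (rule norm_perp_le[OF xn])
        moreover have "\<bar>y \<bullet> x\<bar> \<le> 1" using Cauchy_Schwarz_ineq2[of y x] xn yn by simp
        ultimately show "norm ((y - x) - ((y - x) \<bullet> x) *\<^sub>R x) \<le> \<rho> \<and> - 1 \<le> y \<bullet> x \<and> y \<bullet> x \<le> 1"
          by linarith
      qed
      have "(\<Sum>F\<in>G. flat_area F) \<le> (\<Sum>F\<in>G. 2 * ((nu F \<bullet> x) * flat_area F))"
      proof (rule sum_mono)
        fix F assume F: "F \<in> G"
        have "1/2 \<le> nu F \<bullet> x" using xb[OF F] Gfacts[OF F] t0le by linarith
        then have "flat_area F * 1 \<le> flat_area F * (2 * (nu F \<bullet> x))"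
          by (intro mult_left_mono) (use A0[of F] in auto)
        then show "flat_area F \<le> 2 * ((nu F \<bullet> x) * flat_area F)" by (simp add: algebra_simps)
      qed
      also have "\<dots> = 2 * (\<Sum>F\<in>G. (nu F \<bullet> x) * flat_area F)" by (simp add: sum_distrib_left)
      also have "\<dots> \<le> 2 * (ccyl TYPE('a) * \<rho> ^ (DIM('a) - 1))" using pb by simp
      also have "\<dots> \<le> DIM('a) * kap TYPE('a) * \<rho> ^ (DIM('a) - 1)"
        using cc \<rho>pos by (simp add: mult_right_mono)
      also have "\<dots> = \<omega> * q" by (subst \<rho>q) (simp add: \<omega>eq)
      finally show ?thesis by (simp add: G_def)
    qed
    have "(\<Sum>F\<in>N. flat_area F) \<le> (\<Sum>F\<in>N. \<Sum>x\<in>{x\<in>X. x \<in> F}. flat_area F)"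
    proof (rule sum_mono)
      fix F assume F: "F \<in> N"
      then have "F facet_of P" by (simp add: N_def)
      then obtain x where "x \<in> X" "x \<in> F" using fct by blast
      then have "card {x\<in>X. x \<in> F} \<ge> 1" using assms(2)
      proof -
        assume xx: "x \<in> X" "x \<in> F" "finite X"
        have "finite {x\<in>X. x \<in> F}" using xx(3) by simp
        moreover have "{x\<in>X. x \<in> F} \<noteq> {}" using xx by blast
        ultimately show ?thesis by (simp add: Suc_le_eq card_gt_0_iff)
      qed
      then show "flat_area F \<le> (\<Sum>x\<in>{x\<in>X. x \<in> F}. flat_area F)"
        using A0[of F] by (simp add: mult_le_cancel_right1)
    qed
    also have "\<dots> = (\<Sum>x\<in>X. \<Sum>F\<in>{F\<in>N. x \<in> F}. flat_area F)"
      by (rule sum.swap_restrict[OF finN assms(2)])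
    also have "\<dots> \<le> (\<Sum>x\<in>X. \<omega> * q)" by (rule sum_mono) (rule vb)
    also have "\<dots> = n * \<omega> * q" by (simp add: n_def)
    also have "\<dots> = 1/4 * S" using npos \<omega>pos by (simp add: q_def field_simps)
    finally show ?thesis using goal_eq by simp
  qed
qed

end
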